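(* Let $K\ge1$, $n\ge1$, $\delta\in(0,1)$, $\ell_K=\sum_{k=1}^K1/k$, and $s\in\{1,\dots,K\}$. Define the half-widths $$h_{\mathrm e}(s)=\sqrt{\frac{\log\left(\frac{2K}{\delta s}\right)}{2n}}\cdot\frac{\log\left(\frac{2}{\delta}\right)+\log\left(\frac{2K}{\delta s}\right)}{2\sqrt{\log\left(\frac{2}{\delta}\right)\log\left(\frac{2K}{\delta s}\right)}},\qquad h(s)=\sqrt{\frac{\log\left(\frac{2K\ell_K}{\delta s}\right)}{2n}},$$ which are the half-widths of the intervals $C^{\delta\text{-}\mathrm{Hoef}}(\delta s/K)$ and $C^{\mathrm{Hoef}}(\delta s/(K\ell_K))$ centered at the sample mean. If $$s\ge\frac{K}{\exp\left(2\sqrt{\log\left(\frac{2}{\delta}\right)\log\ell_K}\right)},$$ then $h_{\mathrm e}(s)\le h(s)$, i.e. $C^{\delta\text{-}\mathrm{Hoef}}(\delta s/K)$ is as tight as or tighter than $C^{\mathrm{Hoef}}(\delta s/(K\ell_K))$.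
   Context: Given $n$ i.i.d. samples in $[0,1]$ with sample mean $\hat\mu_n$, $C^{\alpha'\text{-}\mathrm{Hoef}}(\alpha)=\left(\hat\mu_n\pm\sqrt{\frac{\log(2/\alpha)}{2n}}\cdot\frac{\log(2/\alpha)+\log(2/\alpha')}{2\sqrt{\log(2/\alpha')\log(2/\alpha)}}\right)$ (used here with $\alpha'=\delta$) and $C^{\mathrm{Hoef}}(\alpha)=\left(\hat\mu_n\pm\sqrt{\frac{\log(2/\alpha)}{2n}}\right)$. Here $s$ plays the role of the size $|S|$ of the selected set. *)

theory Defs
  imports "HOL-Analysis.Analysis"
begin

definition ellK :: "nat \<Rightarrow> real" where
  "ellK K = (\<Sum>k=1..K. 1 / real k)"

definition hoef_adapt_hw :: "nat \<Rightarrow> real \<Rightarrow> real \<Rightarrow> real" where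
  "hoef_adapt_hw n alpha' alpha =
     sqrt (ln (2 / alpha) / (2 * real n)) *
     ((ln (2 / alpha) + ln (2 / alpha')) / (2 * sqrt (ln (2 / alpha') * ln (2 / alpha))))"

definition hoef_hw :: "nat \<Rightarrow> real \<Rightarrow> real" where
  "hoef_hw n alpha = sqrt (ln (2 / alpha) / (2 * real n))"

definition C_adapt_hoef :: "nat \<Rightarrow> real \<Rightarrow> real \<Rightarrow> real \<Rightarrow> real set" where
  "C_adapt_hoef n mu alpha' alpha =
     {mu - hoef_adapt_hw n alpha' alpha <..< mu + hoef_adapt_hw n alpha' alpha}"

definition C_hoef :: "nat \<Rightarrow> real \<Rightarrow> real \<Rightarrow> real set" where
  "C_hoef n mu alpha = {mu - hoef_hw n alpha <..< mu + hoef_hw n alpha}"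

end

theory Submission
  imports Defs
begin

theorem proposition6:
  fixes K n s :: nat and \<delta> :: real
  assumes "K \<ge> 1" and "n \<ge> 1" and "0 < \<delta>" and "\<delta> < 1"
    and "1 \<le> s" and "s \<le> K"
    and "real s \<ge> real K / exp (2 * sqrt (ln (2 / \<delta>) * ln (ellK K)))"
  shows "hoef_adapt_hw n \<delta> (\<delta> * real s / real K)
           \<le> hoef_hw n (\<delta> * real s / (real K * ellK K))"
proof -
  have ell: "ellK K \<ge> 1"
  proof -
    have "ellK K = 1 / real 1 + (\<Sum>k=2..K. 1 / real k)"
      unfolding ellK_def using assms(1) by (simp add: sum.atLeast_Suc_atMost numeral_2_eq_2)
    moreover have "(\<Sum>k=2..K. 1 / real k) \<ge> 0" by (rule sum_nonneg) simp
    ultimately show ?thesis by simp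
  qed
  define a where "a = ln (2 / \<delta>)"
  define L where "L = ln (ellK K)"
  define b where "b = ln (2 / (\<delta> * real s / real K))"
  have Ks: "real K > 0" "real s > 0" using assms by auto
  have a_eq: "a = ln 2 - ln \<delta>" unfolding a_def using assms by (simp add: ln_div)
  have b_eq: "b = ln 2 - ln \<delta> + ln (real K) - ln (real s)"
    unfolding b_def using assms Ks by (simp add: ln_div ln_mult field_simps)
  have c_eq: "ln (2 / (\<delta> * real s / (real K * ellK K))) = b + L"
    unfolding b_def L_def using assms Ks ell by (simp add: ln_div ln_mult field_simps)
  have apos: "a > 0" unfolding a_def using assms by simp
  have L0: "L \<ge> 0" unfolding L_def using ell by simp
  have lnKs: "ln (real s) \<le> ln (real K)" using assms Ks by simp
  have ba0: "b - a \<ge> 0" using a_eq b_eq lnKs by simp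
  have bpos: "b > 0" using apos ba0 by simp
  define t where "t = 2 * sqrt (a * L)"
  have "real K \<le> real s * exp t" using assms(7) unfolding t_def a_def L_def
    by (simp add: divide_le_eq)
  hence "ln (real K) \<le> ln (real s * exp t)" using Ks by simp
  hence "ln (real K) \<le> ln (real s) + t" using Ks by (simp add: ln_mult)
  hence bat: "b - a \<le> t" using a_eq b_eq by simp
  have "(b - a)^2 \<le> t^2" using bat ba0 by (simp add: power_mono)
  also have "t^2 = 4 * (a * L)" unfolding t_def using apos L0
    by (simp add: power_mult_distrib)
  finally have sq: "(a + b)^2 \<le> 4 * a * (b + L)" by (simp add: power2_eq_square algebra_simps)
  have key: "a + b \<le> 2 * sqrt a * sqrt (b + L)"
  proof -
    have "a + b = sqrt ((a+b)^2)" using apos bpos by simp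
    also have "\<dots> \<le> sqrt (4 * a * (b + L))" using sq by (rule real_sqrt_le_mono)
    also have "\<dots> = 2 * sqrt a * sqrt (b + L)" by (simp add: real_sqrt_mult)
    finally show ?thesis .
  qed
  define q where "q = sqrt (1 / (2 * real n))"
  have q0: "q \<ge> 0" unfolding q_def by simp
  have lhs: "hoef_adapt_hw n \<delta> (\<delta> * real s / real K) = q * ((a + b) / (2 * sqrt a))"
  proof -
    have "hoef_adapt_hw n \<delta> (\<delta> * real s / real K)
       = sqrt b * q * ((b + a) / (2 * (sqrt a * sqrt b)))"
      unfolding hoef_adapt_hw_def q_def a_def[symmetric] b_def[symmetric]
      by (simp add: real_sqrt_mult[symmetric] mult.commute)
    also have "\<dots> = q * ((a + b) / (2 * sqrt a))" proof -
      have "sqrt b > 0" "sqrt a > 0" using bpos apos by auto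
      thus ?thesis by (simp add: field_simps)
    qed
    finally show ?thesis .
  qed
  have rhs: "hoef_hw n (\<delta> * real s / (real K * ellK K)) = q * sqrt (b + L)"
    unfolding hoef_hw_def q_def c_eq by (simp add: real_sqrt_mult[symmetric])
  have "(a + b) / (2 * sqrt a) \<le> sqrt (b + L)"
    using key apos by (simp add: divide_le_eq mult.commute mult.left_commute)
  thus ?thesis unfolding lhs rhs using q0 by (rule mult_left_mono)
qed

end
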